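(* Let $\mathbb{X}$ be a finite-dimensional, strictly convex and smooth real Banach space of dimension greater than $1$. Let $\mathcal{F}$ be the class of all norm one operators in $\mathbb{L}(\mathbb{X},\mathbb{X})$ that are smooth points of $\mathbb{L}(\mathbb{X},\mathbb{X})$. Then the pair $(\mathbb{X},\mathbb{X})$ does not have the uniform sBPBp with respect to $\mathcal{F}$.
   Context: $S_{\mathbb{X}}$ is the unit sphere. $\mathbb{X}$ is strictly convex if every point of $S_{\mathbb{X}}$ is an extreme point of the unit ball. A nonzero element $x$ of a Banach space $\mathbb{Z}$ is a smooth point if there is a unique $f\in\mathbb{Z}^*$ with $\|f\|=1$ and $f(x)=\|x\|$; $\mathbb{X}$ is smooth if all its nonzero points are smooth. Given a family $\mathcal{F}$ of norm one operators in $\mathbb{L}(\mathbb{X},\mathbb{Y})$, the pair $(\mathbb{X},\mathbb{Y})$ has uniform sBPBp with respect to $\mathcal{F}$ if for every $\epsilon>0$ there exists $\eta(\epsilon)>0$ such that whenever $T\in\mathcal{F}$ and $x_0\in S_{\mathbb{X}}$ satisfy $\|Tx_0\|>1-\eta(\epsilon)$, there exists $x_1\in S_{\mathbb{X}}$ with $\|Tx_1\|=1$ and $\|x_1-x_0\|<\epsilon$. *)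

theory Defs
  imports "HOL-Analysis.Analysis"
begin

definition smooth_point :: "'a::real_normed_vector \<Rightarrow> bool" where
  "smooth_point x \<longleftrightarrow> x \<noteq> 0 \<and>
     (\<exists>!f :: 'a \<Rightarrow>\<^sub>L real. norm f = 1 \<and> blinfun_apply f x = norm x)"

definition smooth_space :: "'a::real_normed_vector itself \<Rightarrow> bool" where
  "smooth_space _ \<longleftrightarrow> (\<forall>x::'a. x \<noteq> 0 \<longrightarrow> smooth_point x)"

definition strictly_convex_space :: "'a::real_normed_vector itself \<Rightarrow> bool" where
  "strictly_convex_space _ \<longleftrightarrow>
     (\<forall>x::'a \<in> sphere 0 1. x extreme_point_of cball 0 1)"

definition uniform_sBPBp ::
  "('a::real_normed_vector \<Rightarrow>\<^sub>L 'b::real_normed_vector) set \<Rightarrow> bool" where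
  "uniform_sBPBp F \<longleftrightarrow>
     (\<forall>\<epsilon>>0. \<exists>\<eta>>0. \<forall>T\<in>F. \<forall>x0\<in>sphere (0::'a) 1.
        norm (blinfun_apply T x0) > 1 - \<eta> \<longrightarrow>
        (\<exists>x1\<in>sphere 0 1. norm (blinfun_apply T x1) = 1 \<and> norm (x1 - x0) < \<epsilon>))"

end

theory Submission
  imports Defs
begin

lemma fin_span_subseq:
  fixes S :: "'a::real_normed_vector set"
  assumes "finite S"
  shows "\<forall>x. (\<forall>n. x n \<in> span S) \<and> bounded (range x) \<longrightarrow>
            (\<exists>l (r::nat\<Rightarrow>nat). l \<in> span S \<and> strict_mono r \<and> (x \<circ> r) \<longlonglongrightarrow> l)"
  using assms
proof (induction S rule: finite_induct)
  case empty
  show ?case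
  proof (intro allI impI)
    fix x :: "nat \<Rightarrow> 'a" assume "(\<forall>n. x n \<in> span {}) \<and> bounded (range x)"
    then have "\<forall>n. x n = 0" by simp
    then have "(x \<circ> id) \<longlonglongrightarrow> 0" by (simp add: o_def)
    then show "\<exists>l (r::nat\<Rightarrow>nat). l \<in> span {} \<and> strict_mono r \<and> (x \<circ> r) \<longlonglongrightarrow> l"
      by (metis span_zero strict_mono_id)
  qed
next
  case (insert s S)
  show ?case
  proof (cases "s \<in> span S")
    case True
    then show ?thesis using insert.IH span_redundant by metis
  next
    case False
    have cl: "closed (span S)"
      unfolding closed_sequential_limits
    proof (intro allI impI)
      fix x l assume a: "(\<forall>n. x n \<in> span S) \<and> x \<longlonglongrightarrow> l"
      then have "bounded (range x)"
        using convergent_imp_bounded by blast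
      with a insert.IH obtain l' r where "l' \<in> span S" "strict_mono r" "(x \<circ> r) \<longlonglongrightarrow> l'"
        by blast
      moreover have "(x \<circ> r) \<longlonglongrightarrow> l" using a LIMSEQ_subseq_LIMSEQ \<open>strict_mono r\<close> by blast
      ultimately show "l \<in> span S" using LIMSEQ_unique by metis
    qed
    define d where "d = infdist s (span S)"
    have dpos: "d > 0" unfolding d_def
      by (rule infdist_pos_not_in_closed[OF cl]) (use False span_zero in auto)
    have key: "\<bar>c\<bar> * d \<le> norm (y + c *\<^sub>R s)" if y: "y \<in> span S" for y c
    proof (cases "c = 0")
      case True then show ?thesis by simp
    next
      case False
      have m: "- ((1/c) *\<^sub>R y) \<in> span S" using y by (simp add: span_neg span_scale)
      have "d \<le> dist s (- ((1/c) *\<^sub>R y))" unfolding d_def by (rule infdist_le[OF m])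
      also have "\<dots> = norm (s + (1/c) *\<^sub>R y)" by (simp add: dist_norm)
      finally have "\<bar>c\<bar> * d \<le> \<bar>c\<bar> * norm (s + (1/c) *\<^sub>R y)"
        by (simp add: mult_left_mono)
      also have "\<dots> = norm (c *\<^sub>R (s + (1/c) *\<^sub>R y))" by simp
      also have "c *\<^sub>R (s + (1/c) *\<^sub>R y) = y + c *\<^sub>R s"
        using False by (simp add: algebra_simps)
      finally show ?thesis .
    qed
    show ?thesis
    proof (intro allI impI)
      fix x :: "nat \<Rightarrow> 'a"
      assume a: "(\<forall>n. x n \<in> span (insert s S)) \<and> bounded (range x)"
      then obtain M where M: "\<And>n. norm (x n) \<le> M"
        unfolding bounded_iff by blast
      have "\<forall>n. \<exists>k. x n - k *\<^sub>R s \<in> span S" using a span_breakdown_eq by blast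
      then obtain c where c: "\<And>n. x n - c n *\<^sub>R s \<in> span S" by metis
      have cb: "\<bar>c n\<bar> \<le> M / d" for n
      proof -
        have "\<bar>c n\<bar> * d \<le> norm ((x n - c n *\<^sub>R s) + c n *\<^sub>R s)" by (rule key[OF c])
        also have "\<dots> \<le> M" using M by simp
        finally show ?thesis using dpos by (simp add: field_simps)
      qed
      have "bounded (range c)" unfolding bounded_iff using cb by auto
      then obtain c0 r1 where r1: "strict_mono r1" "(c \<circ> r1) \<longlonglongrightarrow> c0"
        using bounded_imp_convergent_subsequence by blast
      define y where "y n = x (r1 n) - c (r1 n) *\<^sub>R s" for n
      have yS: "\<forall>n. y n \<in> span S" using c y_def by simp
      have "norm (y n) \<le> M + M / d * norm s" for n
      proof -
        have "norm (y n) \<le> norm (x (r1 n)) + \<bar>c (r1 n)\<bar> * norm s"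
          unfolding y_def by (metis norm_scaleR norm_triangle_ineq4)
        also have "\<dots> \<le> M + M / d * norm s"
          using M cb by (intro add_mono mult_right_mono) auto
        finally show ?thesis .
      qed
      then have "bounded (range y)" unfolding bounded_iff by auto
      with yS insert.IH obtain l r2 where r2: "l \<in> span S" "strict_mono r2" "(y \<circ> r2) \<longlonglongrightarrow> l"
        by blast
      have "((c \<circ> r1) \<circ> r2) \<longlonglongrightarrow> c0" using r1 r2 LIMSEQ_subseq_LIMSEQ by blast
      then have "(\<lambda>n. (y \<circ> r2) n + ((c \<circ> r1) \<circ> r2) n *\<^sub>R s) \<longlonglongrightarrow> l + c0 *\<^sub>R s"
        using r2 by (intro tendsto_intros)
      moreover have "(\<lambda>n. (y \<circ> r2) n + ((c \<circ> r1) \<circ> r2) n *\<^sub>R s) = x \<circ> (r1 \<circ> r2)"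
        by (auto simp: y_def)
      ultimately have "(x \<circ> (r1 \<circ> r2)) \<longlonglongrightarrow> l + c0 *\<^sub>R s" by simp
      moreover have "l + c0 *\<^sub>R s \<in> span (insert s S)"
        unfolding span_breakdown_eq by (rule exI[of _ c0]) (simp add: r2(1))
      moreover have "strict_mono (r1 \<circ> r2)" using r1 r2 strict_mono_o by blast
      ultimately show "\<exists>l (r::nat\<Rightarrow>nat). l \<in> span (insert s S) \<and> strict_mono r \<and> (x \<circ> r) \<longlonglongrightarrow> l"
        by blast
    qed
  qed
qed

lemma subseq_finite_conv:
  fixes f :: "nat \<Rightarrow> 'k \<Rightarrow> real"
  assumes "finite K"
  shows "(\<forall>k\<in>K. bounded (range (\<lambda>n. f n k))) \<longrightarrow>
     (\<exists>r::nat\<Rightarrow>nat. strict_mono r \<and> (\<forall>k\<in>K. convergent (\<lambda>n. f (r n) k)))"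
  using assms
proof (induction K rule: finite_induct)
  case empty
  then show ?case using strict_mono_id by blast
next
  case (insert k K)
  show ?case
  proof
    assume b: "\<forall>k\<in>insert k K. bounded (range (\<lambda>n. f n k))"
    with insert.IH obtain r where r: "strict_mono r" "\<forall>k\<in>K. convergent (\<lambda>n. f (r n) k)"
      by blast
    have "bounded (range (\<lambda>n. f (r n) k))"
      using b by (auto intro: bounded_subset[of "range (\<lambda>n. f n k)"])
    then obtain l r' where r': "strict_mono r'" "((\<lambda>n. f (r n) k) \<circ> r') \<longlonglongrightarrow> l"
      using bounded_imp_convergent_subsequence by blast
    have "convergent (\<lambda>n. f ((r \<circ> r') n) k')" if "k' \<in> insert k K" for k'
    proof (cases "k' = k")
      case True then show ?thesis using r' by (auto simp: convergent_def o_def)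
    next
      case False
      then have "convergent (\<lambda>n. f (r n) k')" using that r by auto
      from convergent_subseq_convergent[OF this r'(1)] show ?thesis by (simp add: o_def)
    qed
    moreover have "strict_mono (r \<circ> r')" using r r' strict_mono_o by blast
    ultimately show "\<exists>r. strict_mono r \<and> (\<forall>k\<in>insert k K. convergent (\<lambda>n. f (r n) k))"
      by blast
  qed
qed

lemma dual_subseq:
  fixes \<psi> :: "nat \<Rightarrow> 'a::real_normed_vector \<Rightarrow>\<^sub>L real" and S :: "'a set"
  assumes S: "finite S" "span S = UNIV" and nb: "\<And>n. norm (\<psi> n) \<le> 1"
  shows "\<exists>(r::nat\<Rightarrow>nat) \<phi>. strict_mono r \<and> norm \<phi> \<le> 1 \<and> (\<forall>z. (\<lambda>n. blinfun_apply (\<psi> (r n)) z) \<longlonglongrightarrow> blinfun_apply \<phi> z)"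
proof -
  have bd: "\<bar>blinfun_apply (\<psi> n) z\<bar> \<le> norm z" for n z
  proof -
    have "\<bar>blinfun_apply (\<psi> n) z\<bar> \<le> norm (\<psi> n) * norm z"
      using norm_blinfun[of "\<psi> n" z] by simp
    also have "\<dots> \<le> norm z" using nb[of n] by (simp add: mult_left_le_one_le)
    finally show ?thesis .
  qed
  have "\<forall>k\<in>S. bounded (range (\<lambda>n. blinfun_apply (\<psi> n) k))"
    unfolding bounded_iff using bd by auto
  then obtain r :: "nat \<Rightarrow> nat" where r: "strict_mono r"
      "\<forall>k\<in>S. convergent (\<lambda>n. blinfun_apply (\<psi> (r n)) k)"
    using subseq_finite_conv[OF S(1), of "\<lambda>n k. blinfun_apply (\<psi> n) k"] by blast
  have conv: "convergent (\<lambda>n. blinfun_apply (\<psi> (r n)) z)" for z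
  proof -
    have "z \<in> span S" using S by simp
    then show ?thesis
    proof (rule span_induct)
      show "subspace {z. convergent (\<lambda>n. blinfun_apply (\<psi> (r n)) z)}"
        unfolding subspace_def
        by (auto simp: blinfun.add_right blinfun.scaleR_right blinfun.zero_right
             convergent_const convergent_def intro: tendsto_add tendsto_mult_left)
    qed (use r in auto)
  qed
  define g where "g z = lim (\<lambda>n. blinfun_apply (\<psi> (r n)) z)" for z
  have gl: "(\<lambda>n. blinfun_apply (\<psi> (r n)) z) \<longlonglongrightarrow> g z" for z
    unfolding g_def using conv convergent_LIMSEQ_iff by blast
  have gadd: "g (x + y) = g x + g y" for x y
  proof -
    have "(\<lambda>n. blinfun_apply (\<psi> (r n)) (x + y)) \<longlonglongrightarrow> g x + g y"
      using tendsto_add[OF gl[of x] gl[of y]] by (simp add: blinfun.add_right)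
    then show ?thesis using gl[of "x+y"] LIMSEQ_unique by blast
  qed
  have gscale: "g (c *\<^sub>R x) = c *\<^sub>R g x" for c x
  proof -
    have "(\<lambda>n. blinfun_apply (\<psi> (r n)) (c *\<^sub>R x)) \<longlonglongrightarrow> c * g x"
      using tendsto_mult_left[OF gl[of x], of c] by (simp add: blinfun.scaleR_right)
    then show ?thesis using gl[of "c *\<^sub>R x"] LIMSEQ_unique by fastforce
  qed
  have gb: "norm (g x) \<le> norm x * 1" for x
  proof -
    have "(\<lambda>n. \<bar>blinfun_apply (\<psi> (r n)) x\<bar>) \<longlonglongrightarrow> \<bar>g x\<bar>" using gl tendsto_rabs by blast
    then have "\<bar>g x\<bar> \<le> norm x" by (rule LIMSEQ_le_const2) (use bd in auto)
    then show ?thesis by simp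
  qed
  have bl: "bounded_linear g"
    by (rule bounded_linear_intro[OF gadd gscale gb])
  define \<phi> where "\<phi> = Blinfun g"
  have ap: "blinfun_apply \<phi> = g" unfolding \<phi>_def using bl bounded_linear_Blinfun_apply by blast
  have "norm \<phi> \<le> 1"
    by (rule norm_blinfun_bound) (use gb ap in auto)
  then show ?thesis using r(1) gl ap by metis
qed

lemma dual_le: "\<bar>blinfun_apply (f :: 'a::real_normed_vector \<Rightarrow>\<^sub>L real) x\<bar> \<le> norm f * norm x"
  using norm_blinfun[of f x] by simp

lemma sc_lemma:
  fixes u x :: "'a::real_normed_vector" and \<phi> :: "'a \<Rightarrow>\<^sub>L real"
  assumes sc: "strictly_convex_space TYPE('a)"
    and u: "norm u = 1" "blinfun_apply \<phi> u = 1" and \<phi>: "norm \<phi> = 1"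
    and x: "norm x \<le> 1" "blinfun_apply \<phi> x = 1"
  shows "x = u"
proof (rule ccontr)
  assume ne: "x \<noteq> u"
  define m where "m = midpoint x u"
  have "blinfun_apply \<phi> m = 1"
    unfolding m_def midpoint_def using u x by (simp add: blinfun.scaleR_right blinfun.add_right)
  then have "1 \<le> norm m" using dual_le[of \<phi> m] \<phi> by simp
  moreover have "norm m \<le> 1"
  proof -
    have "norm m = norm ((1/2) *\<^sub>R (x + u))" unfolding m_def midpoint_def by simp
    also have "\<dots> \<le> (1/2) * (norm x + norm u)" using norm_triangle_ineq[of x u] by simp
    also have "\<dots> \<le> 1" using u x by simp
    finally show ?thesis .
  qed
  ultimately have "m \<in> sphere 0 1" by simp
  with sc have "m extreme_point_of cball 0 1" unfolding strictly_convex_space_def by blast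
  moreover have "x \<in> cball 0 1" "u \<in> cball 0 1" using u x by auto
  moreover have "m \<in> open_segment x u" unfolding m_def using ne midpoint_in_open_segment by blast
  ultimately show False unfolding extreme_point_of_def by blast
qed

lemma approx_norm:
  fixes B :: "'a::real_normed_vector \<Rightarrow>\<^sub>L 'b::real_normed_vector"
  assumes u: "norm (u::'a) = 1" and e: "e > 0"
  shows "\<exists>x. norm x = 1 \<and> norm (blinfun_apply B x) > norm B - e"
proof (rule ccontr)
  assume "\<not> ?thesis"
  then have H: "\<And>x. norm x = 1 \<Longrightarrow> norm (blinfun_apply B x) \<le> norm B - e" by force
  have nn: "0 \<le> norm B - e" using H[OF u] norm_ge_zero order_trans by blast
  have "norm (blinfun_apply B x) \<le> (norm B - e) * norm x" for x
  proof (cases "x = 0")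
    case True then show ?thesis by (simp add: blinfun.zero_right)
  next
    case False
    define x' where "x' = (1 / norm x) *\<^sub>R x"
    have "norm x' = 1" unfolding x'_def using False by simp
    then have "norm (blinfun_apply B x') \<le> norm B - e" by (rule H)
    moreover have "blinfun_apply B x = norm x *\<^sub>R blinfun_apply B x'"
      unfolding x'_def using False by (simp add: blinfun.scaleR_right)
    ultimately show ?thesis using False
      by (simp add: mult.commute mult_left_mono)
  qed
  then have "norm B \<le> norm B - e" by (rule norm_blinfun_bound[OF nn])
  with e show False by simp
qed

lemma main_ineq:
  fixes u :: "'a::real_normed_vector" and \<phi> :: "'a \<Rightarrow>\<^sub>L real" and S :: "'a set"
    and T A :: "'a \<Rightarrow>\<^sub>L 'a" and G :: "('a \<Rightarrow>\<^sub>L 'a) \<Rightarrow>\<^sub>L real"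
  assumes S: "finite S" "span S = UNIV"
    and sc: "strictly_convex_space TYPE('a)" and sm: "smooth_space TYPE('a)"
    and u: "norm u = 1" and \<phi>: "norm \<phi> = 1" "blinfun_apply \<phi> u = 1"
    and uniq: "\<And>\<psi>. norm \<psi> = 1 \<Longrightarrow> blinfun_apply \<psi> u = 1 \<Longrightarrow> \<psi> = \<phi>"
    and b: "0 < b" "b < 1"
    and T: "\<And>x. blinfun_apply T x = (1-b) *\<^sub>R x + (b * blinfun_apply \<phi> x) *\<^sub>R u"
    and G: "norm G = 1" "blinfun_apply G T = 1"
  shows "blinfun_apply G A \<le> blinfun_apply \<phi> (blinfun_apply A u)"
proof -
  have \<phi>le: "\<bar>blinfun_apply \<phi> x\<bar> \<le> norm x" for x using dual_le[of \<phi> x] \<phi> by simp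
  have Tb: "norm (blinfun_apply T x) \<le> (1-b) * norm x + b * \<bar>blinfun_apply \<phi> x\<bar>" for x
  proof -
    have "norm (blinfun_apply T x) \<le> norm ((1-b) *\<^sub>R x) + norm ((b * blinfun_apply \<phi> x) *\<^sub>R u)"
      unfolding T by (rule norm_triangle_ineq)
    also have "\<dots> = (1-b) * norm x + b * \<bar>blinfun_apply \<phi> x\<bar>" using b u by (simp add: abs_mult)
    finally show ?thesis .
  qed
  have Tle: "norm (blinfun_apply T x) \<le> norm x" for x
  proof -
    have "b * \<bar>blinfun_apply \<phi> x\<bar> \<le> b * norm x" using \<phi>le b by (simp add: mult_left_mono)
    then show ?thesis using Tb[of x] by (simp add: algebra_simps)
  qed
  have Tu: "blinfun_apply T u = u" unfolding T using \<phi> by (simp add: algebra_simps)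
  define c where "c = blinfun_apply G A"
  define t where "t n = inverse (real (Suc n))" for n
  have tpos: "t n > 0" for n unfolding t_def by simp
  have tlim: "t \<longlonglongrightarrow> 0" unfolding t_def by (rule LIMSEQ_inverse_real_of_nat)
  have lower: "1 + t n * c \<le> norm (T + t n *\<^sub>R A)" for n
  proof -
    have "blinfun_apply G (T + t n *\<^sub>R A) = 1 + t n * c"
      using G unfolding c_def by (simp add: blinfun.add_right blinfun.scaleR_right)
    moreover have "blinfun_apply G (T + t n *\<^sub>R A) \<le> norm (T + t n *\<^sub>R A)"
      using dual_le[of G "T + t n *\<^sub>R A"] G by simp
    ultimately show ?thesis by simp
  qed
  have "\<forall>n. \<exists>x. norm x = 1 \<and> norm (blinfun_apply (T + t n *\<^sub>R A) x) > norm (T + t n *\<^sub>R A) - (t n)^2"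
    using approx_norm[OF u, where e="(t _)^2"] tpos by (metis zero_less_power)
  then obtain x0 where x0: "\<And>n. norm (x0 n) = 1"
      "\<And>n. norm (blinfun_apply (T + t n *\<^sub>R A) (x0 n)) > norm (T + t n *\<^sub>R A) - (t n)^2"
    by metis
  define x where "x n = (if blinfun_apply \<phi> (x0 n) \<ge> 0 then x0 n else - x0 n)" for n
  have xn: "norm (x n) = 1" for n unfolding x_def using x0 by simp
  have xpos: "blinfun_apply \<phi> (x n) \<ge> 0" for n unfolding x_def by (simp add: blinfun.minus_right)
  define y where "y n = blinfun_apply T (x n) + t n *\<^sub>R blinfun_apply A (x n)" for n
  have ylow: "norm (y n) > 1 + t n * c - (t n)^2" for n
  proof -
    have "norm (y n) = norm (blinfun_apply (T + t n *\<^sub>R A) (x0 n))"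
      unfolding y_def x_def by (simp add: blinfun.add_left blinfun.scaleR_left blinfun.minus_right)
        (metis minus_add_distrib norm_minus_cancel diff_conv_add_uminus)
    then show ?thesis using x0(2)[of n] lower[of n] by simp
  qed
  have "\<forall>n. \<exists>\<psi>. norm \<psi> \<le> 1 \<and> blinfun_apply \<psi> (y n) = norm (y n)"
  proof
    fix n show "\<exists>\<psi>. norm \<psi> \<le> 1 \<and> blinfun_apply \<psi> (y n) = norm (y n)"
    proof (cases "y n = 0")
      case True then show ?thesis by (intro exI[of _ 0]) simp
    next
      case False
      then have "smooth_point (y n)" using sm unfolding smooth_space_def by blast
      then show ?thesis unfolding smooth_point_def by force
    qed
  qed
  then obtain \<psi> where \<psi>: "\<And>n. norm (\<psi> n) \<le> 1" "\<And>n. blinfun_apply (\<psi> n) (y n) = norm (y n)"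
    by metis
  have \<psi>le: "\<bar>blinfun_apply (\<psi> n) z\<bar> \<le> norm z" for n z
    using dual_le[of "\<psi> n" z] \<psi>(1)[of n] by (meson mult_left_le_one_le norm_ge_zero order_trans)
  have keyA: "blinfun_apply (\<psi> n) (blinfun_apply A (x n)) > c - t n" for n
  proof -
    have "norm (y n) = blinfun_apply (\<psi> n) (blinfun_apply T (x n)) + t n * blinfun_apply (\<psi> n) (blinfun_apply A (x n))"
      using \<psi>(2)[of n] unfolding y_def by (simp add: blinfun.add_right blinfun.scaleR_right)
    moreover have "blinfun_apply (\<psi> n) (blinfun_apply T (x n)) \<le> 1"
      using \<psi>le[of n "blinfun_apply T (x n)"] Tle[of "x n"] xn[of n] by simp
    ultimately have "1 + t n * c - (t n)^2 < 1 + t n * blinfun_apply (\<psi> n) (blinfun_apply A (x n))"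
      using ylow[of n] by simp
    then have "t n * (c - t n) < t n * blinfun_apply (\<psi> n) (blinfun_apply A (x n))"
      by (simp add: algebra_simps power2_eq_square)
    then show ?thesis using tpos[of n] mult_less_cancel_left_pos by blast
  qed
  have "bounded (range x)" unfolding bounded_iff using xn by auto
  then obtain l r1 where r1: "strict_mono (r1::nat\<Rightarrow>nat)" "(x \<circ> r1) \<longlonglongrightarrow> l"
    using fin_span_subseq[OF S(1)] S(2) by blast
  obtain r2 \<psi>0 where r2: "strict_mono (r2::nat\<Rightarrow>nat)" "norm \<psi>0 \<le> 1"
      "\<And>z. (\<lambda>n. blinfun_apply ((\<psi> \<circ> r1) (r2 n)) z) \<longlonglongrightarrow> blinfun_apply \<psi>0 z"
    using dual_subseq[OF S, of "\<psi> \<circ> r1"] \<psi>(1) by auto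
  define r where "r = r1 \<circ> r2"
  have xr: "(\<lambda>n. x (r n)) \<longlonglongrightarrow> l"
    using LIMSEQ_subseq_LIMSEQ[OF r1(2) r2(1)] unfolding r_def by (simp add: o_def)
  have \<psi>r: "(\<lambda>n. blinfun_apply (\<psi> (r n)) z) \<longlonglongrightarrow> blinfun_apply \<psi>0 z" for z
    using r2(3)[of z] unfolding r_def by (simp add: o_def)
  have tr: "(\<lambda>n. t (r n)) \<longlonglongrightarrow> 0"
  proof -
    have "strict_mono r" unfolding r_def using r1 r2 strict_mono_o by blast
    then show ?thesis using LIMSEQ_subseq_LIMSEQ[OF tlim] by (simp add: o_def)
  qed
  have nl: "norm l = 1"
  proof -
    have "(\<lambda>n. norm (x (r n))) \<longlonglongrightarrow> norm l" using xr by (rule tendsto_norm)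
    then show ?thesis using xn by (simp add: LIMSEQ_const_iff)
  qed
  have \<phi>l: "blinfun_apply \<phi> l \<ge> 0"
  proof -
    have "(\<lambda>n. blinfun_apply \<phi> (x (r n))) \<longlonglongrightarrow> blinfun_apply \<phi> l"
      using xr by (intro blinfun.tendsto tendsto_const)
    then show ?thesis by (rule LIMSEQ_le_const) (use xpos in auto)
  qed
  have yr: "(\<lambda>n. y (r n)) \<longlonglongrightarrow> blinfun_apply T l"
  proof -
    have "(\<lambda>n. blinfun_apply T (x (r n)) + t (r n) *\<^sub>R blinfun_apply A (x (r n)))
        \<longlonglongrightarrow> blinfun_apply T l + 0 *\<^sub>R blinfun_apply A l"
      using xr tr by (intro tendsto_intros blinfun.tendsto tendsto_const)
    then show ?thesis unfolding y_def by simp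
  qed
  have "norm (blinfun_apply T l) \<ge> 1"
  proof -
    have "(\<lambda>n. 1 + t (r n) * c - (t (r n))^2) \<longlonglongrightarrow> 1 + 0 * c - 0^2"
      using tr by (intro tendsto_intros)
    moreover have "(\<lambda>n. norm (y (r n))) \<longlonglongrightarrow> norm (blinfun_apply T l)" using yr by (rule tendsto_norm)
    ultimately have "1 + 0 * c - 0^2 \<le> norm (blinfun_apply T l)"
      by (rule LIMSEQ_le) (use ylow less_imp_le in blast)
    then show ?thesis by simp
  qed
  then have "1 \<le> (1-b) + b * blinfun_apply \<phi> l" using Tb[of l] nl \<phi>l by simp
  then have "blinfun_apply \<phi> l \<ge> 1" using b by (simp add: algebra_simps)
  then have "blinfun_apply \<phi> l = 1" using \<phi>le[of l] nl by simp
  then have lu: "l = u" using sc_lemma[OF sc u \<phi>(2) \<phi>(1)] nl by simp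
  then have yr': "(\<lambda>n. y (r n)) \<longlonglongrightarrow> u" using yr Tu by simp
  have \<psi>0u: "blinfun_apply \<psi>0 u = 1"
  proof -
    have d0: "(\<lambda>n. blinfun_apply (\<psi> (r n)) (y (r n) - u)) \<longlonglongrightarrow> 0"
    proof (rule Lim_null_comparison)
      show "\<forall>\<^sub>F n in sequentially. norm (blinfun_apply (\<psi> (r n)) (y (r n) - u)) \<le> norm (y (r n) - u)"
        using \<psi>le by simp
      show "(\<lambda>n. norm (y (r n) - u)) \<longlonglongrightarrow> 0"
        using yr' by (simp add: LIM_zero_iff tendsto_norm_zero)
    qed
    have "(\<lambda>n. blinfun_apply (\<psi> (r n)) u + blinfun_apply (\<psi> (r n)) (y (r n) - u)) \<longlonglongrightarrow> blinfun_apply \<psi>0 u + 0"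
      using \<psi>r d0 by (intro tendsto_add)
    moreover have "(\<lambda>n. blinfun_apply (\<psi> (r n)) u + blinfun_apply (\<psi> (r n)) (y (r n) - u)) = (\<lambda>n. norm (y (r n)))"
      using \<psi>(2) by (simp add: blinfun.diff_right)
    moreover have "(\<lambda>n. norm (y (r n))) \<longlonglongrightarrow> norm u" using yr' by (rule tendsto_norm)
    ultimately show ?thesis using u LIMSEQ_unique by fastforce
  qed
  have \<psi>0A: "blinfun_apply \<psi>0 (blinfun_apply A u) \<ge> c"
  proof -
    have d0: "(\<lambda>n. blinfun_apply (\<psi> (r n)) (blinfun_apply A (x (r n) - u))) \<longlonglongrightarrow> 0"
    proof (rule Lim_null_comparison)
      show "\<forall>\<^sub>F n in sequentially. norm (blinfun_apply (\<psi> (r n)) (blinfun_apply A (x (r n) - u))) \<le> norm A * norm (x (r n) - u)"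
      proof (rule always_eventually, rule allI)
        fix n
        have "\<bar>blinfun_apply (\<psi> (r n)) (blinfun_apply A (x (r n) - u))\<bar> \<le> norm (blinfun_apply A (x (r n) - u))"
          by (rule \<psi>le)
        also have "\<dots> \<le> norm A * norm (x (r n) - u)" by (rule norm_blinfun)
        finally show "norm (blinfun_apply (\<psi> (r n)) (blinfun_apply A (x (r n) - u))) \<le> norm A * norm (x (r n) - u)"
          by simp
      qed
      have "(\<lambda>n. norm (x (r n) - u)) \<longlonglongrightarrow> 0"
        using xr lu by (simp add: LIM_zero_iff tendsto_norm_zero)
      then show "(\<lambda>n. norm A * norm (x (r n) - u)) \<longlonglongrightarrow> 0"
        using tendsto_mult_right_zero by blast
    qed
    have "(\<lambda>n. blinfun_apply (\<psi> (r n)) (blinfun_apply A u) + blinfun_apply (\<psi> (r n)) (blinfun_apply A (x (r n) - u)))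
          \<longlonglongrightarrow> blinfun_apply \<psi>0 (blinfun_apply A u) + 0"
      using \<psi>r d0 by (intro tendsto_add)
    moreover have "(\<lambda>n. blinfun_apply (\<psi> (r n)) (blinfun_apply A u) + blinfun_apply (\<psi> (r n)) (blinfun_apply A (x (r n) - u)))
          = (\<lambda>n. blinfun_apply (\<psi> (r n)) (blinfun_apply A (x (r n))))"
      by (simp add: blinfun.diff_right)
    ultimately have L: "(\<lambda>n. blinfun_apply (\<psi> (r n)) (blinfun_apply A (x (r n)))) \<longlonglongrightarrow> blinfun_apply \<psi>0 (blinfun_apply A u)"
      by simp
    have "(\<lambda>n. c - t (r n)) \<longlonglongrightarrow> c - 0" using tr by (intro tendsto_intros)
    then have "c - 0 \<le> blinfun_apply \<psi>0 (blinfun_apply A u)"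
      by (rule LIMSEQ_le[OF _ L]) (use keyA less_imp_le in blast)
    then show ?thesis by simp
  qed
  have "norm \<psi>0 = 1"
  proof -
    have "1 \<le> norm \<psi>0" using dual_le[of \<psi>0 u] \<psi>0u u by simp
    then show ?thesis using r2(2) by simp
  qed
  then have "\<psi>0 = \<phi>" using uniq \<psi>0u by blast
  then show ?thesis using \<psi>0A c_def by simp
qed

lemma dim_le1:
  assumes "\<forall>z::'a::real_normed_vector. z \<in> span {v}"
  shows "dim (UNIV :: 'a set) \<le> 1"
proof -
  have "(UNIV::'a set) \<subseteq> span {v}" using assms by auto
  then have "dim (UNIV::'a set) \<le> card {v}" by (rule dim_le_card) simp
  then show ?thesis by simp
qed

theorem theorem2p10:
  assumes "\<exists>S::'a::banach set. finite S \<and> span S = UNIV"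
    and "dim (UNIV :: 'a set) > 1"
    and "strictly_convex_space TYPE('a)"
    and "smooth_space TYPE('a)"
  shows "\<not> uniform_sBPBp {T :: 'a \<Rightarrow>\<^sub>L 'a. norm T = 1 \<and> smooth_point T}"
proof
  assume H: "uniform_sBPBp {T :: 'a \<Rightarrow>\<^sub>L 'a. norm T = 1 \<and> smooth_point T}"
  obtain S :: "'a set" where S: "finite S" "span S = UNIV" using assms(1) by blast
  have sc: "strictly_convex_space TYPE('a)" and sm: "smooth_space TYPE('a)" using assms by auto
  obtain v :: 'a where "v \<noteq> 0"
  proof -
    have "\<not> (\<forall>z::'a. z \<in> span {0})" using dim_le1[of "0::'a"] assms(2) by (meson not_le)
    then show ?thesis using that by auto
  qed
  define u where "u = (1 / norm v) *\<^sub>R v"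
  have u: "norm u = 1" unfolding u_def using \<open>v \<noteq> 0\<close> by simp
  then have "u \<noteq> 0" by auto
  then have "smooth_point u" using sm unfolding smooth_space_def by blast
  then have "\<exists>!\<phi>::'a \<Rightarrow>\<^sub>L real. norm \<phi> = 1 \<and> blinfun_apply \<phi> u = 1"
    unfolding smooth_point_def using u by simp
  then obtain \<phi> where \<phi>0: "norm \<phi> = 1 \<and> blinfun_apply \<phi> u = 1"
    and uniq0: "\<forall>\<psi>::'a \<Rightarrow>\<^sub>L real. norm \<psi> = 1 \<and> blinfun_apply \<psi> u = 1 \<longrightarrow> \<psi> = \<phi>"
    by (elim ex1E) blast
  have \<phi>: "norm \<phi> = 1" "blinfun_apply \<phi> u = 1" using \<phi>0 by auto
  have uniq: "\<And>\<psi>::'a \<Rightarrow>\<^sub>L real. norm \<psi> = 1 \<Longrightarrow> blinfun_apply \<psi> u = 1 \<Longrightarrow> \<psi> = \<phi>" using uniq0 by blast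
  have \<phi>le: "\<bar>blinfun_apply \<phi> x\<bar> \<le> norm x" for x using dual_le[of \<phi> x] \<phi> by simp
  obtain z :: 'a where z: "z \<noteq> 0" "blinfun_apply \<phi> z = 0"
  proof (rule ccontr)
    assume "\<not> thesis"
    then have K: "\<And>z. blinfun_apply \<phi> z = 0 \<Longrightarrow> z = 0" using that by blast
    have "w \<in> span {u}" for w
    proof -
      have "blinfun_apply \<phi> (w - blinfun_apply \<phi> w *\<^sub>R u) = 0"
        using \<phi> by (simp add: blinfun.diff_right blinfun.scaleR_right)
      then have "w = blinfun_apply \<phi> w *\<^sub>R u" using K by force
      then show ?thesis by (metis span_base span_scale singletonI)
    qed
    then show False using dim_le1[of u] assms(2) by force
  qed
  define x0 where "x0 = (1 / norm z) *\<^sub>R z"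
  have x0: "norm x0 = 1" "blinfun_apply \<phi> x0 = 0"
    unfolding x0_def using z by (auto simp: blinfun.scaleR_right)
  obtain \<eta> where \<eta>: "\<eta> > 0" and H1: "\<forall>T\<in>{T :: 'a \<Rightarrow>\<^sub>L 'a. norm T = 1 \<and> smooth_point T}. \<forall>x0\<in>sphere (0::'a) 1.
        norm (blinfun_apply T x0) > 1 - \<eta> \<longrightarrow>
        (\<exists>x1\<in>sphere 0 1. norm (blinfun_apply T x1) = 1 \<and> norm (x1 - x0) < 1)"
    using H unfolding uniform_sBPBp_def by (meson zero_less_one)
  define b where "b = min (1/2) (\<eta>/2)"
  have b: "0 < b" "b < 1" "b < \<eta>" unfolding b_def using \<eta> by auto
  define f where "f x = (1-b) *\<^sub>R x + (b * blinfun_apply \<phi> x) *\<^sub>R u" for x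
  have bl: "bounded_linear f" unfolding f_def
    by (intro bounded_linear_add bounded_linear_scaleR_right bounded_linear_scaleR_const
        bounded_linear_const_mult blinfun.bounded_linear_right)
  define T where "T = Blinfun f"
  have T: "\<And>x. blinfun_apply T x = (1-b) *\<^sub>R x + (b * blinfun_apply \<phi> x) *\<^sub>R u"
    unfolding T_def using bl bounded_linear_Blinfun_apply f_def by metis
  have Tb: "norm (blinfun_apply T x) \<le> (1-b) * norm x + b * \<bar>blinfun_apply \<phi> x\<bar>" for x
  proof -
    have "norm (blinfun_apply T x) \<le> norm ((1-b) *\<^sub>R x) + norm ((b * blinfun_apply \<phi> x) *\<^sub>R u)"
      unfolding T by (rule norm_triangle_ineq)
    also have "\<dots> = (1-b) * norm x + b * \<bar>blinfun_apply \<phi> x\<bar>" using b u by (simp add: abs_mult)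
    finally show ?thesis .
  qed
  have Tu: "blinfun_apply T u = u" unfolding T using \<phi> by (simp add: algebra_simps)
  have nT: "norm T = 1"
  proof (rule antisym)
    show "norm T \<le> 1"
    proof (rule norm_blinfun_bound)
      fix x
      have "b * \<bar>blinfun_apply \<phi> x\<bar> \<le> b * norm x" using \<phi>le b by (simp add: mult_left_mono)
      then show "norm (blinfun_apply T x) \<le> 1 * norm x" using Tb[of x] by (simp add: algebra_simps)
    qed simp
    show "1 \<le> norm T" using norm_blinfun[of T u] Tu u by simp
  qed
  define F0 where "F0 = Blinfun (\<lambda>A::'a \<Rightarrow>\<^sub>L 'a. blinfun_apply \<phi> (blinfun_apply A u))"
  have blF: "bounded_linear (\<lambda>A::'a \<Rightarrow>\<^sub>L 'a. blinfun_apply \<phi> (blinfun_apply A u))"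
    by (rule bounded_linear_compose[OF blinfun.bounded_linear_right blinfun.bounded_linear_left])
  have F0: "\<And>A. blinfun_apply F0 A = blinfun_apply \<phi> (blinfun_apply A u)"
    unfolding F0_def using blF bounded_linear_Blinfun_apply by metis
  have nF0: "norm F0 = 1"
  proof (rule antisym)
    show "norm F0 \<le> 1"
    proof (rule norm_blinfun_bound)
      fix A :: "'a \<Rightarrow>\<^sub>L 'a"
      have "\<bar>blinfun_apply \<phi> (blinfun_apply A u)\<bar> \<le> norm (blinfun_apply A u)" by (rule \<phi>le)
      also have "\<dots> \<le> norm A * norm u" by (rule norm_blinfun)
      finally show "norm (blinfun_apply F0 A) \<le> 1 * norm A" using u F0 by simp
    qed simp
    show "1 \<le> norm F0" using dual_le[of F0 T] F0 Tu \<phi> nT by simp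
  qed
  have F0T: "blinfun_apply F0 T = norm T" using F0 Tu \<phi> nT by simp
  have "smooth_point T"
    unfolding smooth_point_def
  proof (intro conjI ex1I[of _ F0])
    show "T \<noteq> 0" using nT by auto
    show "norm F0 = 1" using nF0 by simp
    show "blinfun_apply F0 T = norm T" using F0T by simp
    fix G assume G: "norm G = 1 \<and> blinfun_apply G T = norm T"
    have le: "blinfun_apply G A \<le> blinfun_apply \<phi> (blinfun_apply A u)" for A
      using main_ineq[OF S sc sm u \<phi> uniq b(1) b(2) T] G nT by simp
    show "G = F0"
    proof (rule blinfun_eqI)
      fix A
      have "blinfun_apply G (-A) \<le> blinfun_apply \<phi> (blinfun_apply (-A) u)" by (rule le)
      then have "blinfun_apply G A \<ge> blinfun_apply \<phi> (blinfun_apply A u)"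
        by (simp add: blinfun.minus_right blinfun.minus_left)
      with le[of A] show "blinfun_apply G A = blinfun_apply F0 A" using F0 by simp
    qed
  qed
  then have TF: "T \<in> {T :: 'a \<Rightarrow>\<^sub>L 'a. norm T = 1 \<and> smooth_point T}" using nT by simp
  have "x0 \<in> sphere 0 1" using x0 by simp
  moreover have "norm (blinfun_apply T x0) > 1 - \<eta>"
    using T x0 b by simp
  ultimately obtain x1 where x1: "x1 \<in> sphere 0 1" "norm (blinfun_apply T x1) = 1" "norm (x1 - x0) < 1"
    using H1 TF by blast
  have "1 \<le> (1-b) + b * \<bar>blinfun_apply \<phi> x1\<bar>" using Tb[of x1] x1 by simp
  then have "1 \<le> \<bar>blinfun_apply \<phi> x1\<bar>" using b by (simp add: algebra_simps)
  moreover have "\<bar>blinfun_apply \<phi> (x1 - x0)\<bar> = \<bar>blinfun_apply \<phi> x1\<bar>"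
    using x0 by (simp add: blinfun.diff_right)
  ultimately show False using \<phi>le[of "x1 - x0"] x1(3) by simp
qed

end
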